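(* Let $h$ be a complex-valued function that is holomorphic on an open neighbourhood of $S^3$ in $\mathbb{C}^2$, and let $\mathbf{F}=\mathbf{E}+\mathrm{i}\mathbf{B}=h(\alpha,\beta)\,\nabla\alpha\times\nabla\beta$ with $\alpha,\beta$ as defined in the context. Suppose $L\subset\mathbb{R}^3$ is a union of closed magnetic field lines of $\mathbf{B}(0,\cdot)$, or a union of closed electric field lines of $\mathbf{E}(0,\cdot)$. Then $\varphi(L)$, where $\varphi=(\alpha,\beta)|_{t=0}$, is a Legendrian link in $S^3$ with respect to the standard contact structure.
   Context: $S^3=\{(z_1,z_2)\in\mathbb{C}^2: |z_1|^2+|z_2|^2=1\}$. Define $\alpha,\beta:\mathbb{R}\times\mathbb{R}^3\to\mathbb{C}$ by $\alpha=\dfrac{x^2+y^2+z^2-t^2-1+2\mathrm{i}z}{x^2+y^2+z^2-(t-\mathrm{i})^2}$, $\beta=\dfrac{2(x-\mathrm{i}y)}{x^2+y^2+z^2-(t-\mathrm{i})^2}$; for each fixed $t$, $(\alpha,\beta)$ maps $\mathbb{R}^3$ into $S^3$ (extending to a diffeomorphism $\mathbb{R}^3\cup\{\infty\}\to S^3$, with $\infty\mapsto(1,0)$). $\nabla$ denotes the gradient in the spatial variables $(x,y,z)$, and $\mathbf{E}=\mathrm{Re}\,\mathbf{F}$, $\mathbf{B}=\mathrm{Im}\,\mathbf{F}$. Writing $z_j=x_j+\mathrm{i}y_j$, the standard contact structure $\xi_0$ on $S^3$ is the plane field $\ker(\alpha_0)\cap TS^3$ with $\alpha_0=\sum_{j=1}^2(x_j\,dy_j-y_j\,dx_j)$;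 equivalently $\xi_0$ at $p$ is the maximal complex subspace of $T_pS^3$. A link in $S^3$ is Legendrian if it is everywhere tangent to $\xi_0$. A closed field line is a closed embedded curve along which the field is nonvanishing and tangent. *)

theory Defs
  imports "HOL-Analysis.Analysis"
begin

definition S3 :: "(complex \<times> complex) set" where
  "S3 = {(z1, z2). (cmod z1)\<^sup>2 + (cmod z2)\<^sup>2 = 1}"

definition alpha0 :: "complex \<times> complex \<Rightarrow> complex \<times> complex \<Rightarrow> real" where
  "alpha0 p v =
     Re (fst p) * Im (fst v) - Im (fst p) * Re (fst v)
   + Re (snd p) * Im (snd v) - Im (snd p) * Re (snd v)"

definition tangent_S3 :: "complex \<times> complex \<Rightarrow> complex \<times> complex \<Rightarrow> bool" where
  "tangent_S3 p v \<longleftrightarrow>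
     Re (fst p) * Re (fst v) + Im (fst p) * Im (fst v)
   + Re (snd p) * Re (snd v) + Im (snd p) * Im (snd v) = 0"

definition in_xi0 :: "complex \<times> complex \<Rightarrow> complex \<times> complex \<Rightarrow> bool" where
  "in_xi0 p v \<longleftrightarrow> tangent_S3 p v \<and> alpha0 p v = 0"

definition holomorphic2_on :: "(complex \<times> complex \<Rightarrow> complex) \<Rightarrow> (complex \<times> complex) set \<Rightarrow> bool" where
  "holomorphic2_on h U \<longleftrightarrow>
     (\<forall>p\<in>U. \<exists>D. (h has_derivative D) (at p) \<and>
                 (\<forall>c::complex. \<forall>v. D (c * fst v, c * snd v) = c * D v))"

definition closed_embedded_curve :: "(real \<Rightarrow> 'a::real_normed_vector) \<Rightarrow> bool" where
  "closed_embedded_curve c \<longleftrightarrow>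
     (\<exists>T>0. (\<forall>s. c (s + T) = c s) \<and> inj_on c {0..<T}) \<and>
     (\<forall>s. c differentiable (at s)) \<and>
     continuous_on UNIV (\<lambda>s. vector_derivative c (at s)) \<and>
     (\<forall>s. vector_derivative c (at s) \<noteq> 0)"

definition closed_field_line :: "(real^3 \<Rightarrow> real^3) \<Rightarrow> (real \<Rightarrow> real^3) \<Rightarrow> bool" where
  "closed_field_line V \<gamma> \<longleftrightarrow>
     closed_embedded_curve \<gamma> \<and>
     (\<forall>s. V (\<gamma> s) \<noteq> 0 \<and> (\<exists>k::real. vector_derivative \<gamma> (at s) = k *\<^sub>R V (\<gamma> s)))"

definition legendrian_link :: "(complex \<times> complex) set \<Rightarrow> bool" where
  "legendrian_link K \<longleftrightarrow>
     (\<exists>\<C>. finite \<C> \<and> K = (\<Union>c\<in>\<C>. range c) \<and>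
        (\<forall>c\<in>\<C>. closed_embedded_curve c \<and> range c \<subseteq> S3 \<and>
                 (\<forall>s. in_xi0 (c s) (vector_derivative c (at s)))) \<and>
        (\<forall>c1\<in>\<C>. \<forall>c2\<in>\<C>. range c1 = range c2 \<or> range c1 \<inter> range c2 = {}))"

definition denom :: "real \<Rightarrow> real^3 \<Rightarrow> complex" where
  "denom t p = complex_of_real ((p$1)\<^sup>2 + (p$2)\<^sup>2 + (p$3)\<^sup>2) - (complex_of_real t - \<i>)\<^sup>2"

definition alpha :: "real \<Rightarrow> real^3 \<Rightarrow> complex" where
  "alpha t p = (complex_of_real ((p$1)\<^sup>2 + (p$2)\<^sup>2 + (p$3)\<^sup>2 - t\<^sup>2 - 1) + 2 * \<i> * complex_of_real (p$3))
               / denom t p"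

definition beta :: "real \<Rightarrow> real^3 \<Rightarrow> complex" where
  "beta t p = 2 * (complex_of_real (p$1) - \<i> * complex_of_real (p$2)) / denom t p"

definition cgrad :: "(real^3 \<Rightarrow> complex) \<Rightarrow> real^3 \<Rightarrow> complex^3" where
  "cgrad f p = (\<chi> i. vector_derivative (\<lambda>s. f (p + s *\<^sub>R axis i 1)) (at 0))"

definition ccross :: "complex^3 \<Rightarrow> complex^3 \<Rightarrow> complex^3" where
  "ccross u v = vector [u$2 * v$3 - u$3 * v$2, u$3 * v$1 - u$1 * v$3, u$1 * v$2 - u$2 * v$1]"

definition Ffield :: "(complex \<times> complex \<Rightarrow> complex) \<Rightarrow> real \<Rightarrow> real^3 \<Rightarrow> complex^3" where
  "Ffield h t p = (\<chi> i. h (alpha t p, beta t p) * (ccross (cgrad (alpha t) p) (cgrad (beta t) p))$i)"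

definition Efield :: "(complex \<times> complex \<Rightarrow> complex) \<Rightarrow> real \<Rightarrow> real^3 \<Rightarrow> real^3" where
  "Efield h t p = (\<chi> i. Re (Ffield h t p $ i))"

definition Bfield :: "(complex \<times> complex \<Rightarrow> complex) \<Rightarrow> real \<Rightarrow> real^3 \<Rightarrow> real^3" where
  "Bfield h t p = (\<chi> i. Im (Ffield h t p $ i))"

definition phi :: "real^3 \<Rightarrow> complex \<times> complex" where
  "phi p = (alpha 0 p, beta 0 p)"

end

theory Submission
  imports Defs "HOL-Complex_Analysis.Cauchy_Integral_Formula"
begin

definition qf :: "real^3 \<Rightarrow> real" where
  "qf p = 1 / (1 + (p$1)\<^sup>2 + (p$2)\<^sup>2 + (p$3)\<^sup>2)"

definition spr :: "real^3 \<Rightarrow> real^3 \<Rightarrow> real" where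
  "spr p v = (p$1)*(v$1) + (p$2)*(v$2) + (p$3)*(v$3)"

definition dA :: "real^3 \<Rightarrow> real^3 \<Rightarrow> complex" where
  "dA p v = Complex (4 * (qf p)\<^sup>2 * spr p v) (2 * (v$3) * qf p - 4 * (p$3) * (qf p)\<^sup>2 * spr p v)"

definition dB :: "real^3 \<Rightarrow> real^3 \<Rightarrow> complex" where
  "dB p v = Complex (2 * (v$1) * qf p - 4 * (p$1) * (qf p)\<^sup>2 * spr p v) (- 2 * (v$2) * qf p + 4 * (p$2) * (qf p)\<^sup>2 * spr p v)"

lemma den_pos: "1 + ((p::real^3)$1)\<^sup>2 + (p$2)\<^sup>2 + (p$3)\<^sup>2 > (0::real)"
  by (simp add: add_pos_nonneg)

lemma cdiv_real: "(D::real) \<noteq> 0 \<Longrightarrow> z / complex_of_real D = Complex (Re z / D) (Im z / D)"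
  by (simp add: complex_eq_iff)

lemma denom0: "denom 0 p = complex_of_real (1 + (p$1)\<^sup>2 + (p$2)\<^sup>2 + (p$3)\<^sup>2)"
  by (simp add: denom_def power2_eq_square)

lemma den_ne: "(1 + ((p::real^3)$1)\<^sup>2 + (p$2)\<^sup>2 + (p$3)\<^sup>2) \<noteq> (0::real)" using den_pos[of p] by linarith

lemma alpha0_eq: "alpha 0 p = Complex (1 - 2*qf p) (2*(p$3)*qf p)"
  unfolding alpha_def denom0 cdiv_real[OF den_ne] qf_def
  using den_ne[of p] by (simp add: field_simps)

lemma beta0_eq: "beta 0 p = Complex (2*(p$1)*qf p) (-2*(p$2)*qf p)"
  unfolding beta_def denom0 cdiv_real[OF den_ne] qf_def
  using den_ne[of p] by (simp add: field_simps)

lemma hd_Complex: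
  "(f has_derivative f') F \<Longrightarrow> (g has_derivative g') F \<Longrightarrow>
   ((\<lambda>x. Complex (f x) (g x)) has_derivative (\<lambda>v. Complex (f' v) (g' v))) F"
  unfolding Complex_eq by (auto intro!: derivative_eq_intros)

lemma hd_nth: "((\<lambda>p::real^'n. p $ i) has_derivative (\<lambda>v. v $ i)) F"
  by (rule bounded_linear_imp_has_derivative) (rule bounded_linear_vec_nth)

lemma qf_deriv: "(qf has_derivative (\<lambda>v. -2*(qf p)\<^sup>2 * spr p v)) (at p)"
proof -
  have "((\<lambda>p::real^3. inverse (1 + (p$1)\<^sup>2 + (p$2)\<^sup>2 + (p$3)\<^sup>2)) has_derivative
     (\<lambda>v. -2*(qf p)\<^sup>2 * spr p v)) (at p)"
    apply (rule has_derivative_eq_rhs)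
     apply (rule derivative_intros hd_nth den_ne)+
    using den_ne[of p]
    by (auto simp: qf_def spr_def field_simps power2_eq_square)
  then show ?thesis unfolding qf_def[abs_def] by (simp add: divide_inverse)
qed

lemma alpha_deriv: "(alpha 0 has_derivative dA p) (at p)"
proof -
  have "((\<lambda>p. Complex (1 - 2*qf p) (2*(p$3)*qf p)) has_derivative dA p) (at p)"
    unfolding dA_def
    apply (rule has_derivative_eq_rhs)
     apply (rule derivative_intros hd_Complex hd_nth qf_deriv)+
    by (auto simp: spr_def field_simps power2_eq_square)
  then show ?thesis unfolding alpha0_eq[abs_def] .
qed

lemma beta_deriv: "(beta 0 has_derivative dB p) (at p)"
proof -
  have "((\<lambda>p. Complex (2*(p$1)*qf p) (-2*(p$2)*qf p)) has_derivative dB p) (at p)"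
    unfolding dB_def
    apply (rule has_derivative_eq_rhs)
     apply (rule derivative_intros hd_Complex hd_nth qf_deriv)+
    by (auto simp: spr_def field_simps power2_eq_square)
  then show ?thesis unfolding beta0_eq[abs_def] .
qed

lemma qf_rel: "qf p * (1 + (p$1)\<^sup>2 + (p$2)\<^sup>2 + (p$3)\<^sup>2) = 1"
  unfolding qf_def using den_ne[of p] by simp

lemma phi_S3: "phi p \<in> S3"
proof -
  have "(1 - 2*qf p)\<^sup>2 + (2*(p$3)*qf p)\<^sup>2 + ((2*(p$1)*qf p)\<^sup>2 + (-2*(p$2)*qf p)\<^sup>2) = 1"
    using qf_rel[of p] by (simp add: algebra_simps power2_eq_square) algebra
  then show ?thesis
    unfolding S3_def phi_def alpha0_eq beta0_eq
    by (simp add: cmod_def)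
qed

lemma Re_u: "Re (cnj (alpha 0 p) * dA p v + cnj (beta 0 p) * dB p v) = 0"
  unfolding alpha0_eq beta0_eq dA_def dB_def spr_def
  using qf_rel[of p] by (simp add: algebra_simps power2_eq_square) algebra

lemma dA_lin: "dA p v = of_real (v$1) * dA p (axis 1 1) + of_real (v$2) * dA p (axis 2 1) + of_real (v$3) * dA p (axis 3 1)"
  unfolding dA_def spr_def by (simp add: complex_eq_iff axis_def algebra_simps)

lemma dB_lin: "dB p v = of_real (v$1) * dB p (axis 1 1) + of_real (v$2) * dB p (axis 2 1) + of_real (v$3) * dB p (axis 3 1)"
  unfolding dB_def spr_def by (simp add: complex_eq_iff axis_def algebra_simps)

lemma dA_scale: "dA p (k *\<^sub>R v) = of_real k * dA p v"
  unfolding dA_def spr_def by (simp add: complex_eq_iff algebra_simps)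

lemma dB_scale: "dB p (k *\<^sub>R v) = of_real k * dB p v"
  unfolding dB_def spr_def by (simp add: complex_eq_iff algebra_simps)

lemma cgrad_gen:
  assumes "\<And>p. (f has_derivative f' p) (at p)"
  shows "cgrad f p = (\<chi> j. f' p (axis j 1))"
proof -
  have "vector_derivative (\<lambda>s. f (p + s *\<^sub>R axis i 1)) (at 0) = f' p (axis i 1)" for i
  proof -
    have lin: "linear (f' p)" using assms has_derivative_linear by blast
    have d1: "((\<lambda>s::real. p + s *\<^sub>R axis i 1) has_derivative (\<lambda>s. s *\<^sub>R axis i 1)) (at 0)"
      by (auto intro!: derivative_eq_intros)
    have "((\<lambda>s. f (p + s *\<^sub>R axis i 1)) has_derivative (\<lambda>s. f' p (s *\<^sub>R axis i 1))) (at 0)"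
      using has_derivative_compose[OF d1, of f "f' p"] assms[of p] by (simp add: o_def)
    then have "((\<lambda>s. f (p + s *\<^sub>R axis i 1)) has_vector_derivative f' p (axis i 1)) (at 0)"
      unfolding has_vector_derivative_def using linear_scale[OF lin] by simp
    then show ?thesis by (rule vector_derivative_at)
  qed
  then show ?thesis unfolding cgrad_def by simp
qed

lemma cgrad_alpha: "cgrad (alpha 0) p = (\<chi> j. dA p (axis j 1))"
  by (rule cgrad_gen[OF alpha_deriv])
lemma cgrad_beta: "cgrad (beta 0) p = (\<chi> j. dB p (axis j 1))"
  by (rule cgrad_gen[OF beta_deriv])

definition wv :: "real^3 \<Rightarrow> complex^3" where
  "wv p = ccross (\<chi> j. dA p (axis j 1)) (\<chi> j. dB p (axis j 1))"

lemma Ffield0: "Ffield h 0 p $ i = h (phi p) * wv p $ i"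
  unfolding Ffield_def wv_def cgrad_alpha cgrad_beta phi_def by simp

lemma wv1: "wv p $ 1 = dA p (axis 2 1) * dB p (axis 3 1) - dA p (axis 3 1) * dB p (axis 2 1)"
  unfolding wv_def ccross_def by simp
lemma wv2: "wv p $ 2 = dA p (axis 3 1) * dB p (axis 1 1) - dA p (axis 1 1) * dB p (axis 3 1)"
  unfolding wv_def ccross_def by simp
lemma wv3: "wv p $ 3 = dA p (axis 1 1) * dB p (axis 2 1) - dA p (axis 2 1) * dB p (axis 1 1)"
  unfolding wv_def ccross_def by simp

lemma legend_alg:
  fixes a1 a2 a3 b1 b2 b3 A B H :: complex and f :: "complex \<Rightarrow> real"
  assumes u1: "Re (cnj A * a1 + cnj B * b1) = 0"
    and u2: "Re (cnj A * a2 + cnj B * b2) = 0"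
    and u3: "Re (cnj A * a3 + cnj B * b3) = 0"
    and f: "f = Re \<or> f = Im"
  defines "w1 \<equiv> a2*b3 - a3*b2" and "w2 \<equiv> a3*b1 - a1*b3" and "w3 \<equiv> a1*b2 - a2*b1"
  shows "cnj A * (of_real (f (H*w1)) * a1 + of_real (f (H*w2)) * a2 + of_real (f (H*w3)) * a3)
       + cnj B * (of_real (f (H*w1)) * b1 + of_real (f (H*w2)) * b2 + of_real (f (H*w3)) * b3) = 0"
proof -
  define t1 where "t1 = Im (cnj A * a1 + cnj B * b1)"
  define t2 where "t2 = Im (cnj A * a2 + cnj B * b2)"
  define t3 where "t3 = Im (cnj A * a3 + cnj B * b3)"
  have e1: "cnj A * a1 + cnj B * b1 = \<i> * of_real t1" using u1 unfolding t1_def by (simp add: complex_eq_iff)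
  have e2: "cnj A * a2 + cnj B * b2 = \<i> * of_real t2" using u2 unfolding t2_def by (simp add: complex_eq_iff)
  have e3: "cnj A * a3 + cnj B * b3 = \<i> * of_real t3" using u3 unfolding t3_def by (simp add: complex_eq_iff)
  have z: "w1 * (cnj A * a1 + cnj B * b1) + w2 * (cnj A * a2 + cnj B * b2) + w3 * (cnj A * a3 + cnj B * b3) = 0"
    unfolding w1_def w2_def w3_def by algebra
  hence "\<i> * (w1 * of_real t1 + w2 * of_real t2 + w3 * of_real t3) = 0"
    unfolding e1 e2 e3 by (simp add: algebra_simps)
  hence z2: "H * (w1 * of_real t1 + w2 * of_real t2 + w3 * of_real t3) = 0" by simp
  have "f (H*w1) * t1 + f (H*w2) * t2 + f (H*w3) * t3 = f (H * (w1 * of_real t1 + w2 * of_real t2 + w3 * of_real t3))"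
    using f by (auto simp: algebra_simps)
  also have "\<dots> = 0" using z2 f by auto
  finally have zz: "f (H*w1) * t1 + f (H*w2) * t2 + f (H*w3) * t3 = 0" .
  have "cnj A * (of_real (f (H*w1)) * a1 + of_real (f (H*w2)) * a2 + of_real (f (H*w3)) * a3)
       + cnj B * (of_real (f (H*w1)) * b1 + of_real (f (H*w2)) * b2 + of_real (f (H*w3)) * b3)
     = of_real (f (H*w1)) * (cnj A * a1 + cnj B * b1) + of_real (f (H*w2)) * (cnj A * a2 + cnj B * b2)
       + of_real (f (H*w3)) * (cnj A * a3 + cnj B * b3)"
    by (simp add: algebra_simps)
  also have "\<dots> = \<i> * of_real (f (H*w1) * t1 + f (H*w2) * t2 + f (H*w3) * t3)"
    unfolding e1 e2 e3 by (simp add: algebra_simps)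
  finally show ?thesis using zz by simp
qed

lemma in_xi0I: "cnj (fst P) * fst v + cnj (snd P) * snd v = 0 \<Longrightarrow> in_xi0 P v"
  unfolding in_xi0_def tangent_S3_def alpha0_def
  by (simp add: complex_eq_iff algebra_simps)

lemma legendrian_point:
  assumes f: "f = Re \<or> f = Im"
  shows "in_xi0 (phi p) (dA p (k *\<^sub>R (\<chi> i. f (H * wv p $ i))), dB p (k *\<^sub>R (\<chi> i. f (H * wv p $ i))))"
proof (rule in_xi0I)
  let ?V = "(\<chi> i. f (H * wv p $ i)) :: real^3"
  have "cnj (alpha 0 p) * dA p ?V + cnj (beta 0 p) * dB p ?V = 0"
    unfolding dA_lin[of p ?V] dB_lin[of p ?V]
    apply simp
    unfolding wv1 wv2 wv3
    by (rule legend_alg[OF Re_u Re_u Re_u f])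
  then show "cnj (fst (phi p)) * fst (dA p (k *\<^sub>R ?V), dB p (k *\<^sub>R ?V)) +
    cnj (snd (phi p)) * snd (dA p (k *\<^sub>R ?V), dB p (k *\<^sub>R ?V)) = 0"
    unfolding phi_def dA_scale dB_scale
    by (simp add: algebra_simps) (metis distrib_left mult.assoc mult.left_commute mult_zero_right)
qed

lemma qf_pos: "qf p > 0" unfolding qf_def using den_pos[of p] by simp

lemma phi_inj: "inj phi"
proof (rule injI)
  fix p p' assume e: "phi p = phi p'"
  have q: "qf p = qf p'" using e unfolding phi_def alpha0_eq by (simp add: complex_eq_iff)
  have "p$3 = p'$3" "p$1 = p'$1" "p$2 = p'$2"
    using e qf_pos[of p] unfolding phi_def alpha0_eq beta0_eq q by (auto simp: complex_eq_iff)
  then show "p = p'" by (simp add: vec_eq_iff forall_3)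
qed

lemma dAB_zero: "dA p v = 0 \<Longrightarrow> dB p v = 0 \<Longrightarrow> v = 0"
proof -
  assume a: "dA p v = 0" and b: "dB p v = 0"
  have q: "qf p > 0" by (rule qf_pos)
  from a have "spr p v = 0" using q unfolding dA_def by (simp add: complex_eq_iff)
  with a b q have "v$3 = 0" "v$1 = 0" "v$2 = 0" unfolding dA_def dB_def by (auto simp: complex_eq_iff)
  then show "v = 0" by (simp add: vec_eq_iff forall_3)
qed

lemma phi_deriv: "(phi has_derivative (\<lambda>v. (dA p v, dB p v))) (at p)"
  unfolding phi_def[abs_def] by (intro has_derivative_Pair alpha_deriv beta_deriv)

lemma cont_qf: "continuous_on S \<gamma> \<Longrightarrow> continuous_on S (\<lambda>s. qf (\<gamma> s))"
  unfolding qf_def by (intro continuous_intros) (use den_ne in auto)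

lemma cont_dA: "continuous_on S \<gamma> \<Longrightarrow> continuous_on S g \<Longrightarrow> continuous_on S (\<lambda>s. dA (\<gamma> s) (g s))"
  unfolding dA_def spr_def Complex_eq by (intro continuous_intros cont_qf)

lemma cont_dB: "continuous_on S \<gamma> \<Longrightarrow> continuous_on S g \<Longrightarrow> continuous_on S (\<lambda>s. dB (\<gamma> s) (g s))"
  unfolding dB_def spr_def Complex_eq by (intro continuous_intros cont_qf)

lemma curve_vd:
  assumes "(\<gamma> has_vector_derivative g) (at s)"
  shows "((phi \<circ> \<gamma>) has_vector_derivative (dA (\<gamma> s) g, dB (\<gamma> s) g)) (at s)"
proof -
  have "((phi \<circ> \<gamma>) has_derivative (\<lambda>t. (dA (\<gamma> s) (t *\<^sub>R g), dB (\<gamma> s) (t *\<^sub>R g)))) (at s)"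
    using has_derivative_compose[OF assms[unfolded has_vector_derivative_def] phi_deriv]
    by (simp add: o_def)
  then show ?thesis unfolding has_vector_derivative_def dA_scale dB_scale
    by (simp add: scaleR_prod_def scaleR_conv_of_real)
qed

lemma curve_phi:
  assumes "closed_embedded_curve \<gamma>"
  shows "closed_embedded_curve (phi \<circ> \<gamma>)"
    and "\<And>s. vector_derivative (phi \<circ> \<gamma>) (at s) =
           (dA (\<gamma> s) (vector_derivative \<gamma> (at s)), dB (\<gamma> s) (vector_derivative \<gamma> (at s)))"
proof -
  from assms obtain T where T: "T > 0" "\<forall>s. \<gamma> (s + T) = \<gamma> s" "inj_on \<gamma> {0..<T}"
    and d: "\<forall>s. \<gamma> differentiable (at s)"
    and c: "continuous_on UNIV (\<lambda>s. vector_derivative \<gamma> (at s))"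
    and nz: "\<forall>s. vector_derivative \<gamma> (at s) \<noteq> 0"
    unfolding closed_embedded_curve_def by blast
  have vd: "(\<gamma> has_vector_derivative vector_derivative \<gamma> (at s)) (at s)" for s
    using d vector_derivative_works by blast
  have vd2: "((phi \<circ> \<gamma>) has_vector_derivative (dA (\<gamma> s) (vector_derivative \<gamma> (at s)), dB (\<gamma> s) (vector_derivative \<gamma> (at s)))) (at s)" for s
    by (rule curve_vd[OF vd])
  show eq: "vector_derivative (phi \<circ> \<gamma>) (at s) =
           (dA (\<gamma> s) (vector_derivative \<gamma> (at s)), dB (\<gamma> s) (vector_derivative \<gamma> (at s)))" for s
    by (rule vector_derivative_at[OF vd2])
  have cg: "continuous_on UNIV \<gamma>"
    using d by (simp add: continuous_at_imp_continuous_on differentiable_imp_continuous_within)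
  show "closed_embedded_curve (phi \<circ> \<gamma>)"
    unfolding closed_embedded_curve_def
  proof (intro conjI allI exI[of _ T])
    show "T > 0" by fact
    show "(phi \<circ> \<gamma>) (s + T) = (phi \<circ> \<gamma>) s" for s using T by simp
    show "inj_on (phi \<circ> \<gamma>) {0..<T}" using T(3) phi_inj by (simp add: comp_inj_on inj_on_subset)
    show "(phi \<circ> \<gamma>) differentiable (at s)" for s using vd2 differentiableI_vector by blast
    show "continuous_on UNIV (\<lambda>s. vector_derivative (phi \<circ> \<gamma>) (at s))"
      unfolding eq by (intro continuous_on_Pair cont_dA cont_dB cg c)
    show "vector_derivative (phi \<circ> \<gamma>) (at s) \<noteq> 0" for s
      unfolding eq using dAB_zero nz by (auto simp: zero_prod_def)
  qed
qed

definition LL :: "('a::metric_space \<Rightarrow> 'b::metric_space) \<Rightarrow> 'a \<Rightarrow> bool" where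
  "LL f p \<longleftrightarrow> (\<exists>e>0. \<exists>C. C-lipschitz_on (ball p e) f)"

lemma LL_shrink: "C-lipschitz_on (ball p e) f \<Longrightarrow> e' \<le> e \<Longrightarrow> C-lipschitz_on (ball p e') f"
  by (rule lipschitz_on_subset) auto

lemma LL_const: "LL (\<lambda>x. c) p"
  unfolding LL_def by (intro exI[of _ 1] exI[of _ 0]) (auto intro: lipschitz_intros)

lemma LL_id: "LL (\<lambda>x. x) p"
  unfolding LL_def by (intro exI[of _ 1] exI[of _ 1]) (auto intro: lipschitz_intros)

lemma LL_compose:
  assumes f: "LL f p" and g: "LL g (f p)"
  shows "LL (\<lambda>x. g (f x)) p"
proof -
  from f obtain e C where e: "e > 0" and fC: "C-lipschitz_on (ball p e) f" unfolding LL_def by blast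
  from g obtain e' D where e': "e' > 0" and gD: "D-lipschitz_on (ball (f p) e') g" unfolding LL_def by blast
  have C0: "C \<ge> 0" using fC lipschitz_on_nonneg by blast
  define e2 where "e2 = min e (e' / (C+1))"
  have e2: "e2 > 0" using e e' C0 unfolding e2_def by simp
  have sub: "f ` ball p e2 \<subseteq> ball (f p) e'"
  proof
    fix y assume "y \<in> f ` ball p e2"
    then obtain x where x: "x \<in> ball p e2" "y = f x" by auto
    have "dist (f p) (f x) \<le> C * dist p x"
      using lipschitz_onD[OF fC] x e2 by (auto simp: e2_def)
    also have "\<dots> \<le> C * e2" using x C0 by (auto intro: mult_left_mono)
    also have "\<dots> < e'"
    proof -
      have "C * e2 \<le> C * (e' / (C+1))" using C0 by (intro mult_left_mono) (auto simp: e2_def)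
      also have "\<dots> < e'" using C0 e' by (simp add: field_simps)
      finally show ?thesis .
    qed
    finally show "y \<in> ball (f p) e'" using x by simp
  qed
  have "(D * C)-lipschitz_on (ball p e2) (\<lambda>x. g (f x))"
    by (rule lipschitz_on_compose2[OF LL_shrink[OF fC] lipschitz_on_subset[OF gD sub]]) (simp add: e2_def)
  then show ?thesis unfolding LL_def using e2 by blast
qed

lemma LL_bl: "bounded_linear g \<Longrightarrow> LL g p"
proof -
  assume "bounded_linear g"
  then obtain C where "C-lipschitz_on (ball p 1) g" by (rule bounded_linear.lipschitz_boundE)
  then show ?thesis unfolding LL_def by (intro exI[of _ 1]) auto
qed

lemma LL_common:
  assumes "LL f p" "LL g p"
  obtains e C D where "e > 0" "C-lipschitz_on (ball p e) f" "D-lipschitz_on (ball p e) g"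
proof -
  from assms obtain e1 C e2 D where "e1 > 0" "C-lipschitz_on (ball p e1) f" "e2 > 0" "D-lipschitz_on (ball p e2) g"
    unfolding LL_def by blast
  then show ?thesis
    using that[of "min e1 e2" C D] LL_shrink[of C p e1 f "min e1 e2"] LL_shrink[of D p e2 g "min e1 e2"] by auto
qed

lemma LL_add:
  fixes f g :: "'a::metric_space \<Rightarrow> 'b::real_normed_vector"
  assumes "LL f p" "LL g p" shows "LL (\<lambda>x. f x + g x) p"
proof -
  obtain e C D where "e > 0" "C-lipschitz_on (ball p e) f" "D-lipschitz_on (ball p e) g"
    using LL_common[OF assms] by blast
  then show ?thesis unfolding LL_def by (blast intro: lipschitz_on_add)
qed

lemma LL_minus:
  fixes f :: "'a::metric_space \<Rightarrow> 'b::real_normed_vector"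
  assumes "LL f p" shows "LL (\<lambda>x. - f x) p"
  using assms unfolding LL_def by (auto intro: lipschitz_on_minus)

lemma LL_diff:
  fixes f g :: "'a::metric_space \<Rightarrow> 'b::real_normed_vector"
  assumes "LL f p" "LL g p" shows "LL (\<lambda>x. f x - g x) p"
  using LL_add[OF assms(1) LL_minus[OF assms(2)]] by simp

lemma lip_bound:
  fixes f :: "'a::metric_space \<Rightarrow> 'b::real_normed_vector"
  assumes "C-lipschitz_on (ball p e) f" "x \<in> ball p e"
  shows "norm (f x) \<le> norm (f p) + C * e"
proof -
  have C0: "C \<ge> 0" using assms lipschitz_on_nonneg by blast
  have "0 < e" using assms(2) by (metis zero_le_dist le_less_trans mem_ball)
  then have pe: "p \<in> ball p e" by simp
  have "norm (f x) \<le> norm (f p) + dist (f x) (f p)"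
    by (metis dist_norm norm_triangle_sub add.commute)
  also have "dist (f x) (f p) \<le> C * dist x p" by (rule lipschitz_onD[OF assms(1) assms(2) pe])
  also have "\<dots> \<le> C * e" using assms(2) C0 by (intro mult_left_mono) (auto simp: dist_commute)
  finally show ?thesis by simp
qed

lemma LL_mult:
  fixes f g :: "'a::metric_space \<Rightarrow> 'b::real_normed_algebra"
  assumes "LL f p" "LL g p" shows "LL (\<lambda>x. f x * g x) p"
proof -
  obtain e C D where e: "e > 0" and fC: "C-lipschitz_on (ball p e) f" and gD: "D-lipschitz_on (ball p e) g"
    using LL_common[OF assms] by blast
  have C0: "C \<ge> 0" "D \<ge> 0" using fC gD lipschitz_on_nonneg by blast+
  define Mf where "Mf = norm (f p) + C * e"
  define Mg where "Mg = norm (g p) + D * e"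
  have Mf0: "Mf \<ge> 0" "Mg \<ge> 0" using C0 e unfolding Mf_def Mg_def by auto
  have "(Mf * D + Mg * C)-lipschitz_on (ball p e) (\<lambda>x. f x * g x)"
  proof (rule lipschitz_onI)
    fix x y assume x: "x \<in> ball p e" and y: "y \<in> ball p e"
    have "f x * g x - f y * g y = f x * (g x - g y) + (f x - f y) * g y" by (simp add: algebra_simps)
    then have "dist (f x * g x) (f y * g y) \<le> norm (f x) * norm (g x - g y) + norm (f x - f y) * norm (g y)"
      by (metis dist_norm norm_mult_ineq norm_triangle_le add_mono)
    also have "\<dots> \<le> Mf * (D * dist x y) + (C * dist x y) * Mg"
      apply (intro add_mono mult_mono)
      using lip_bound[OF fC x] lip_bound[OF gD y] lipschitz_onD[OF fC x y] lipschitz_onD[OF gD x y]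
        Mf0 C0 by (auto simp: Mf_def Mg_def dist_norm)
    finally show "dist (f x * g x) (f y * g y) \<le> (Mf * D + Mg * C) * dist x y"
      by (simp add: algebra_simps)
  qed (use Mf0 C0 in auto)
  then show ?thesis unfolding LL_def using e by blast
qed

lemma LL_inverse:
  fixes f :: "'a::metric_space \<Rightarrow> 'b::real_normed_field"
  assumes "LL f p" "f p \<noteq> 0" shows "LL (\<lambda>x. inverse (f x)) p"
proof -
  from assms obtain e C where e: "e > 0" and fC: "C-lipschitz_on (ball p e) f" unfolding LL_def by blast
  have C0: "C \<ge> 0" using fC lipschitz_on_nonneg by blast
  define m where "m = norm (f p)"
  have m: "m > 0" using assms unfolding m_def by simp
  define e2 where "e2 = min e (m / (2*(C+1)))"
  have e2: "e2 > 0" using e m C0 unfolding e2_def by simp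
  have fC2: "C-lipschitz_on (ball p e2) f" by (rule LL_shrink[OF fC]) (simp add: e2_def)
  have pe: "p \<in> ball p e2" using e2 by simp
  have low: "norm (f x) \<ge> m/2" if x: "x \<in> ball p e2" for x
  proof -
    have "dist (f x) (f p) \<le> C * dist x p" by (rule lipschitz_onD[OF fC2 x pe])
    also have "\<dots> \<le> C * e2" using x C0 by (intro mult_left_mono) (auto simp: dist_commute)
    also have "\<dots> \<le> C * (m / (2*(C+1)))" using C0 by (intro mult_left_mono) (auto simp: e2_def)
    also have "\<dots> \<le> m/2" using C0 m by (simp add: field_simps)
    finally have "dist (f x) (f p) \<le> m/2" .
    moreover have "m \<le> norm (f x) + dist (f x) (f p)" unfolding m_def
      by (metis dist_norm norm_triangle_sub dist_commute norm_minus_commute)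
    ultimately show ?thesis by linarith
  qed
  have "(C * 4 / m\<^sup>2)-lipschitz_on (ball p e2) (\<lambda>x. inverse (f x))"
  proof (rule lipschitz_onI)
    fix x y assume x: "x \<in> ball p e2" and y: "y \<in> ball p e2"
    have nz: "f x \<noteq> 0" "f y \<noteq> 0" using low[OF x] low[OF y] m by auto
    have "inverse (f x) - inverse (f y) = (f y - f x) / (f x * f y)"
      using nz by (simp add: field_simps)
    then have "dist (inverse (f x)) (inverse (f y)) = norm (f y - f x) / (norm (f x) * norm (f y))"
      by (simp add: dist_norm norm_divide norm_mult)
    also have "\<dots> \<le> (C * dist x y) / ((m/2) * (m/2))"
    proof (rule frac_le)
      show "norm (f y - f x) \<le> C * dist x y" using lipschitz_onD[OF fC2 y x] by (simp add: dist_commute dist_norm norm_minus_commute)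
      show "(m/2) * (m/2) \<le> norm (f x) * norm (f y)" using low[OF x] low[OF y] m by (intro mult_mono) auto
      show "0 \<le> C * dist x y" using C0 by simp
      show "0 < (m/2) * (m/2)" using m by simp
    qed
    also have "\<dots> = (C * 4 / m\<^sup>2) * dist x y" by (simp add: field_simps power2_eq_square)
    finally show "dist (inverse (f x)) (inverse (f y)) \<le> (C * 4 / m\<^sup>2) * dist x y" .
  qed (use C0 m in auto)
  then show ?thesis unfolding LL_def using e2 by blast
qed

lemma LL_divide:
  fixes f g :: "'a::metric_space \<Rightarrow> 'b::real_normed_field"
  assumes "LL f p" "LL g p" "g p \<noteq> 0" shows "LL (\<lambda>x. f x / g x) p"
  using LL_mult[OF assms(1) LL_inverse[OF assms(2,3)]] by (simp add: divide_inverse)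

lemma LL_Pair:
  assumes "LL f p" "LL g p" shows "LL (\<lambda>x. (f x, g x)) p"
proof -
  obtain e C D where "e > 0" "C-lipschitz_on (ball p e) f" "D-lipschitz_on (ball p e) g"
    using LL_common[OF assms] by blast
  then show ?thesis unfolding LL_def by (blast intro: lipschitz_on_Pair)
qed

lemma LL_vec:
  fixes f :: "'a::metric_space \<Rightarrow> real^'n"
  assumes "\<And>i. LL (\<lambda>x. f x $ i) p" shows "LL f p"
proof -
  have "\<forall>i. \<exists>e. e > 0 \<and> (\<exists>C. C-lipschitz_on (ball p e) (\<lambda>x. f x $ i))"
    using assms unfolding LL_def by blast
  then obtain E where E: "\<And>i. E i > 0" "\<And>i. \<exists>C. C-lipschitz_on (ball p (E i)) (\<lambda>x. f x $ i)"
    by metis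
  then obtain Cf where Cf: "\<And>i. (Cf i)-lipschitz_on (ball p (E i)) (\<lambda>x. f x $ i)" by metis
  define e where "e = Min (range E)"
  have e: "e > 0" unfolding e_def using E(1) by (subst Min_gr_iff) auto
  have eE: "e \<le> E i" for i unfolding e_def by (rule Min_le) auto
  have Ci: "(Cf i)-lipschitz_on (ball p e) (\<lambda>x. f x $ i)" for i by (rule LL_shrink[OF Cf eE])
  have "(\<Sum>i\<in>UNIV. Cf i)-lipschitz_on (ball p e) f"
  proof (rule lipschitz_onI)
    fix x y assume x: "x \<in> ball p e" and y: "y \<in> ball p e"
    have "dist (f x) (f y) = norm (f x - f y)" by (simp add: dist_norm)
    also have "\<dots> \<le> (\<Sum>i\<in>UNIV. \<bar>(f x - f y) $ i\<bar>)" by (rule norm_le_l1_cart)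
    also have "\<dots> \<le> (\<Sum>i\<in>UNIV. Cf i * dist x y)"
      apply (rule sum_mono)
      using lipschitz_onD[OF Ci x y] by (simp add: dist_real_def)
    finally show "dist (f x) (f y) \<le> (\<Sum>i\<in>UNIV. Cf i) * dist x y" by (simp add: sum_distrib_right)
  next
    show "0 \<le> (\<Sum>i\<in>UNIV. Cf i)" by (intro sum_nonneg) (use Ci lipschitz_on_nonneg in blast)
  qed
  then show ?thesis unfolding LL_def using e by blast
qed

lemma cauchy_bound:
  fixes g :: "complex \<Rightarrow> complex"
  assumes "g holomorphic_on ball \<xi> r" "continuous_on (cball \<xi> r) g" "r > 0"
    and "\<And>x. x \<in> cball \<xi> r \<Longrightarrow> norm (g x) \<le> M"
    and "(g has_field_derivative d) (at \<xi>)"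
  shows "norm d \<le> M / r"
proof -
  have "norm ((deriv ^^ 1) g \<xi>) \<le> fact 1 * M / r^1"
    by (rule Cauchy_inequality[OF assms(1-3)]) (use assms(4) in \<open>auto simp: dist_norm\<close>)
  then show ?thesis using DERIV_imp_deriv[OF assms(5)] by simp
qed

lemma dist_pair_le: "dist (a::'a::metric_space, b::'b::metric_space) (c, d) \<le> dist a c + dist b d"
  unfolding dist_prod_def by (rule sqrt_sum_squares_le_sum_abs[THEN order_trans]) simp

lemma clin_decomp:
  assumes lin: "linear D" and cl: "\<forall>c::complex. \<forall>v. D (c * fst v, c * snd v) = c * D v"
  shows "D v = fst v * D (1,0) + snd v * (D (0,1) :: complex)"
proof -
  have "D v = D ((fst v, 0) + (0, snd v))" by simp
  also have "\<dots> = D (fst v, 0) + D (0, snd v)" by (rule linear_add[OF lin])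
  also have "D (fst v, 0) = fst v * D (1, 0)" using cl[rule_format, of "fst v" "(1,0)"] by simp
  also have "D (0, snd v) = snd v * D (0, 1)" using cl[rule_format, of "snd v" "(0,1)"] by simp
  finally show ?thesis .
qed

lemma LL_holo:
  assumes U: "open U" and hol: "holomorphic2_on h U" and z: "z \<in> U"
  shows "LL h z"
proof -
  obtain R where R: "R > 0" "ball z R \<subseteq> U" using U z open_contains_ball by blast
  define r where "r = R/4"
  have r: "r > 0" using R unfolding r_def by simp
  have hd: "\<forall>w\<in>U. \<exists>D. (h has_derivative D) (at w) \<and> (\<forall>c::complex. \<forall>v. D (c * fst v, c * snd v) = c * D v)"
    using hol unfolding holomorphic2_on_def by blast
  then obtain Df where Df0: "\<forall>w\<in>U. (h has_derivative Df w) (at w) \<and> (\<forall>c::complex. \<forall>v. Df w (c * fst v, c * snd v) = c * Df w v)"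
    using bchoice[OF hd] by blast
  have Df: "\<And>w. w \<in> U \<Longrightarrow> (h has_derivative Df w) (at w)"
    "\<And>w. w \<in> U \<Longrightarrow> \<forall>c::complex. \<forall>v. Df w (c * fst v, c * snd v) = c * Df w v"
    using Df0 by blast+
  have contU: "continuous_on U h"
    by (rule continuous_at_imp_continuous_on) (use Df(1) has_derivative_continuous in blast)
  have sub3: "cball z (3*r) \<subseteq> U" using R r unfolding r_def by (auto simp: subset_iff)
  have "compact (h ` cball z (3*r))"
    by (rule compact_continuous_image[OF continuous_on_subset[OF contU sub3]]) simp
  then have "bounded (h ` cball z (3*r))" by (rule compact_imp_bounded)
  then obtain M where M: "M > 0" "\<And>y. y \<in> cball z (3*r) \<Longrightarrow> norm (h y) \<le> M"
    unfolding bounded_pos by blast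
  have pdiff: "((\<lambda>t. h (t, b)) has_field_derivative Df (a, b) (1,0)) (at a)"
    and pdiff2: "((\<lambda>t. h (a, t)) has_field_derivative Df (a, b) (0,1)) (at b)"
    if ab: "(a, b) \<in> U" for a b
  proof -
    have d1: "((\<lambda>t. (t, b)) has_derivative (\<lambda>t. (t, 0))) (at a)"
      by (auto intro!: derivative_eq_intros)
    have "((\<lambda>t. h (t, b)) has_derivative (\<lambda>t. Df (a,b) (t, 0))) (at a)"
      using has_derivative_compose[OF d1 Df(1)[OF ab]] by (simp add: o_def)
    moreover have "(\<lambda>t. Df (a,b) (t, 0)) = (*) (Df (a,b) (1,0))"
    proof
      fix t show "Df (a,b) (t, 0) = Df (a,b) (1,0) * t"
        using Df(2)[OF ab, rule_format, of t "(1,0)"] by (simp add: mult.commute)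
    qed
    ultimately show "((\<lambda>t. h (t, b)) has_field_derivative Df (a, b) (1,0)) (at a)"
      unfolding has_field_derivative_def by simp
    have d2: "((\<lambda>t. (a, t)) has_derivative (\<lambda>t. (0, t))) (at b)"
      by (auto intro!: derivative_eq_intros)
    have "((\<lambda>t. h (a, t)) has_derivative (\<lambda>t. Df (a,b) (0, t))) (at b)"
      using has_derivative_compose[OF d2 Df(1)[OF ab]] by (simp add: o_def)
    moreover have "(\<lambda>t. Df (a,b) (0, t)) = (*) (Df (a,b) (0,1))"
    proof
      fix t show "Df (a,b) (0, t) = Df (a,b) (0,1) * t"
        using Df(2)[OF ab, rule_format, of t "(0,1)"] by (simp add: mult.commute)
    qed
    ultimately show "((\<lambda>t. h (a, t)) has_field_derivative Df (a, b) (0,1)) (at b)"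
      unfolding has_field_derivative_def by simp
  qed
  have bnd: "norm (Df w v) \<le> (2*M/r) * norm v" if w: "w \<in> ball z r" for w v
  proof -
    obtain a b where wab: "w = (a, b)" by (cases w)
    have in3_1: "(t, b) \<in> cball z (3*r)" if "t \<in> cball a r" for t
    proof -
      have "dist z (t, b) \<le> dist (fst z) t + dist (snd z) b"
        using dist_pair_le[of "fst z" "snd z" t b] by simp
      also have "\<dots> \<le> (dist (fst z) a + dist a t) + dist (snd z) b"
        using dist_triangle by (intro add_right_mono) blast
      also have "\<dots> \<le> r + r + r"
        using that w dist_fst_le[of z w] dist_snd_le[of z w] unfolding wab by (intro add_mono) auto
      finally show ?thesis by simp
    qed
    have in3_2: "(a, t) \<in> cball z (3*r)" if "t \<in> cball b r" for t
    proof -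
      have "dist z (a, t) \<le> dist (fst z) a + dist (snd z) t"
        using dist_pair_le[of "fst z" "snd z" a t] by simp
      also have "\<dots> \<le> dist (fst z) a + (dist (snd z) b + dist b t)"
        using dist_triangle by (intro add_left_mono) blast
      also have "\<dots> \<le> r + (r + r)"
        using that w dist_fst_le[of z w] dist_snd_le[of z w] unfolding wab by (intro add_mono) auto
      finally show ?thesis by simp
    qed
    have wU: "(a, b) \<in> U" using w wab sub3 r by auto
    have n1: "norm (Df (a,b) (1,0)) \<le> M / r"
    proof (rule cauchy_bound[OF _ _ r _ pdiff[OF wU]])
      show "(\<lambda>t. h (t, b)) holomorphic_on ball a r"
        unfolding holomorphic_on_def field_differentiable_def
      proof
        fix t assume "t \<in> ball a r"
        then have "(t, b) \<in> U" using in3_1 sub3 mem_ball_imp_mem_cball by blast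
        then show "\<exists>f'. ((\<lambda>t. h (t, b)) has_field_derivative f') (at t within ball a r)"
          using pdiff has_field_derivative_at_within by blast
      qed
      show "continuous_on (cball a r) (\<lambda>t. h (t, b))"
      proof (rule continuous_on_compose2[OF contU])
        show "continuous_on (cball a r) (\<lambda>t. (t, b))" by (intro continuous_intros)
        show "(\<lambda>t. (t, b)) ` cball a r \<subseteq> U" using in3_1 sub3 by blast
      qed
      show "norm (h (x, b)) \<le> M" if "x \<in> cball a r" for x using M(2) in3_1 that by blast
    qed
    have n2: "norm (Df (a,b) (0,1)) \<le> M / r"
    proof (rule cauchy_bound[OF _ _ r _ pdiff2[OF wU]])
      show "(\<lambda>t. h (a, t)) holomorphic_on ball b r"
        unfolding holomorphic_on_def field_differentiable_def
      proof
        fix t assume "t \<in> ball b r"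
        then have "(a, t) \<in> U" using in3_2 sub3 mem_ball_imp_mem_cball by blast
        then show "\<exists>f'. ((\<lambda>t. h (a, t)) has_field_derivative f') (at t within ball b r)"
          using pdiff2 has_field_derivative_at_within by blast
      qed
      show "continuous_on (cball b r) (\<lambda>t. h (a, t))"
      proof (rule continuous_on_compose2[OF contU])
        show "continuous_on (cball b r) (\<lambda>t. (a, t))" by (intro continuous_intros)
        show "(\<lambda>t. (a, t)) ` cball b r \<subseteq> U" using in3_2 sub3 by blast
      qed
      show "norm (h (a, x)) \<le> M" if "x \<in> cball b r" for x using M(2) in3_2 that by blast
    qed
    have lin: "linear (Df w)" using Df(1) wU wab has_derivative_linear by blast
    have "Df w v = fst v * Df w (1,0) + snd v * Df w (0,1)"
      by (rule clin_decomp[OF lin Df(2)]) (use wU wab in simp)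
    then have "norm (Df w v) \<le> norm (fst v) * norm (Df w (1,0)) + norm (snd v) * norm (Df w (0,1))"
      using norm_triangle_ineq[of "fst v * Df w (1,0)" "snd v * Df w (0,1)"] by (simp add: norm_mult)
    also have "\<dots> \<le> norm v * (M/r) + norm v * (M/r)"
    proof -
      have "norm (fst v) \<le> norm v" using norm_fst_le[of "fst v" "snd v"] by simp
      moreover have "norm (snd v) \<le> norm v" using norm_snd_le[of "snd v" "fst v"] by simp
      ultimately show ?thesis using n1 n2 wab by (intro add_mono mult_mono) auto
    qed
    finally show ?thesis by (simp add: algebra_simps)
  qed
  have "(2*M/r)-lipschitz_on (ball z r) h"
  proof (rule bounded_derivative_imp_lipschitz)
    show "(h has_derivative Df x) (at x within ball z r)" if "x \<in> ball z r" for x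
    proof -
      have "x \<in> U" using that sub3 r by auto
      then show ?thesis using Df(1) has_derivative_at_withinI by blast
    qed
    show "onorm (Df x) \<le> 2*M/r" if "x \<in> ball z r" for x
      by (rule onorm_le) (rule bnd[OF that])
  qed (use M r in auto)
  then show ?thesis unfolding LL_def using r by blast
qed

lemma sqdist_deriv:
  fixes d :: "real \<Rightarrow> 'a::real_inner"
  assumes "(d has_vector_derivative d') (at u)"
  shows "((\<lambda>u. d u \<bullet> d u) has_real_derivative (2 * (d u \<bullet> d'))) (at u)"
proof -
  have "((\<lambda>u. d u \<bullet> d u) has_derivative (\<lambda>t. d u \<bullet> (t *\<^sub>R d') + (t *\<^sub>R d') \<bullet> d u)) (at u)"
    using assms unfolding has_vector_derivative_def by (intro has_derivative_inner)
  moreover have "(\<lambda>t. d u \<bullet> (t *\<^sub>R d') + (t *\<^sub>R d') \<bullet> d u) = (*) (2 * (d u \<bullet> d'))"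
    by (auto simp: inner_commute algebra_simps)
  ultimately show ?thesis unfolding has_field_derivative_def by simp
qed

lemma ode_unique:
  fixes W :: "'a::real_inner \<Rightarrow> 'a"
  assumes lip: "C-lipschitz_on X W"
    and d1: "\<And>u. u \<in> {a<..<b} \<Longrightarrow> (\<eta>1 has_vector_derivative W (\<eta>1 u)) (at u)"
    and d2: "\<And>u. u \<in> {a<..<b} \<Longrightarrow> (\<eta>2 has_vector_derivative W (\<eta>2 u)) (at u)"
    and inX: "\<And>u. u \<in> {a<..<b} \<Longrightarrow> \<eta>1 u \<in> X \<and> \<eta>2 u \<in> X"
    and u0: "u0 \<in> {a<..<b}" and eq0: "\<eta>1 u0 = \<eta>2 u0"
    and u1: "u1 \<in> {a<..<b}"
  shows "\<eta>1 u1 = \<eta>2 u1"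
proof -
  have C0: "C \<ge> 0" using lip lipschitz_on_nonneg by blast
  define d where "d u = \<eta>1 u - \<eta>2 u" for u
  define g where "g u = d u \<bullet> d u" for u
  define g' where "g' u = 2 * (d u \<bullet> (W (\<eta>1 u) - W (\<eta>2 u)))" for u
  have gd: "(g has_real_derivative g' u) (at u)" if "u \<in> {a<..<b}" for u
    unfolding g_def g'_def d_def
    by (rule sqdist_deriv) (intro has_vector_derivative_diff d1 d2 that)
  have gb: "\<bar>g' u\<bar> \<le> 2 * C * g u" if "u \<in> {a<..<b}" for u
  proof -
    have "\<bar>d u \<bullet> (W (\<eta>1 u) - W (\<eta>2 u))\<bar> \<le> norm (d u) * norm (W (\<eta>1 u) - W (\<eta>2 u))"
      by (rule Cauchy_Schwarz_ineq2)
    also have "norm (W (\<eta>1 u) - W (\<eta>2 u)) \<le> C * norm (d u)"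
      using lipschitz_onD[OF lip, of "\<eta>1 u" "\<eta>2 u"] inX[OF that] by (simp add: d_def dist_norm)
    finally have "\<bar>d u \<bullet> (W (\<eta>1 u) - W (\<eta>2 u))\<bar> \<le> norm (d u) * (C * norm (d u))"
      by (simp add: mult_left_mono)
    then show ?thesis unfolding g'_def g_def by (simp add: power2_norm_eq_inner[symmetric] power2_eq_square algebra_simps)
  qed
  have g0: "g u0 = 0" unfolding g_def d_def using eq0 by simp
  have gnn: "g u \<ge> 0" for u unfolding g_def by simp
  have "g u1 \<le> 0"
  proof (cases "u0 \<le> u1")
    case True
    define G where "G u = exp (-2*C*u) * g u" for u
    have "G u1 \<le> G u0"
    proof (rule DERIV_nonpos_imp_nonincreasing[OF True])
      fix x assume x: "u0 \<le> x" "x \<le> u1"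
      then have xab: "x \<in> {a<..<b}" using u0 u1 by auto
      have "(G has_real_derivative (exp (-2*C*x) * (-2*C) * g x + exp (-2*C*x) * g' x)) (at x)"
        unfolding G_def[abs_def]
        by (auto intro!: derivative_eq_intros gd[OF xab])
      moreover have "exp (-2*C*x) * (-2*C) * g x + exp (-2*C*x) * g' x \<le> 0"
      proof -
        have "g' x \<le> 2*C*g x" using gb[OF xab] by linarith
        then have "exp (-2*C*x) * g' x \<le> exp (-2*C*x) * (2*C*g x)" by (intro mult_left_mono) auto
        then show ?thesis by (simp add: algebra_simps)
      qed
      ultimately show "\<exists>y. (G has_real_derivative y) (at x) \<and> y \<le> 0" by blast
    qed
    then show ?thesis using g0 exp_gt_zero[of "-2*C*u1"] unfolding G_def by (simp add: mult_le_0_iff)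
  next
    case False
    then have le: "u1 \<le> u0" by simp
    define G where "G u = exp (2*C*u) * g u" for u
    have "G u1 \<le> G u0"
    proof (rule DERIV_nonneg_imp_nondecreasing[OF le])
      fix x assume x: "u1 \<le> x" "x \<le> u0"
      then have xab: "x \<in> {a<..<b}" using u0 u1 by auto
      have "(G has_real_derivative (exp (2*C*x) * (2*C) * g x + exp (2*C*x) * g' x)) (at x)"
        unfolding G_def[abs_def]
        by (auto intro!: derivative_eq_intros gd[OF xab])
      moreover have "exp (2*C*x) * (2*C) * g x + exp (2*C*x) * g' x \<ge> 0"
      proof -
        have "g' x \<ge> - (2*C*g x)" using gb[OF xab] by linarith
        then have "exp (2*C*x) * g' x \<ge> exp (2*C*x) * (- (2*C*g x))" by (intro mult_left_mono) auto
        then show ?thesis by (simp add: algebra_simps)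
      qed
      ultimately show "\<exists>y. (G has_real_derivative y) (at x) \<and> y \<ge> 0" by blast
    qed
    then show ?thesis using g0 exp_gt_zero[of "2*C*u1"] unfolding G_def by (simp add: mult_le_0_iff)
  qed
  then have "g u1 = 0" using gnn[of u1] by simp
  then show ?thesis unfolding g_def d_def by simp
qed

lemma LL_nth: "LL (\<lambda>p::real^'n. p $ i) q"
  by (rule LL_bl) (rule bounded_linear_vec_nth)

lemma LL_of_real: "LL f p \<Longrightarrow> LL (\<lambda>x. complex_of_real (f x)) p"
  using LL_compose[OF _ LL_bl[OF bounded_linear_of_real]] by blast

lemma LL_Re: "LL f p \<Longrightarrow> LL (\<lambda>x. Re (f x)) p"
  using LL_compose[OF _ LL_bl[OF bounded_linear_Re]] by blast

lemma LL_Im: "LL f p \<Longrightarrow> LL (\<lambda>x. Im (f x)) p"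
  using LL_compose[OF _ LL_bl[OF bounded_linear_Im]] by blast

lemma LL_qf: "LL qf p"
proof -
  have "LL (\<lambda>p::real^3. 1 / (1 + (p$1) * (p$1) + (p$2) * (p$2) + (p$3) * (p$3))) p"
    by (intro LL_divide LL_add LL_mult LL_const LL_nth) (use den_ne[of p] in \<open>simp add: power2_eq_square\<close>)
  then show ?thesis unfolding qf_def[abs_def] by (simp add: power2_eq_square)
qed

lemma LL_dA: "LL (\<lambda>p. dA p e) p"
  unfolding dA_def spr_def Complex_eq power2_eq_square
  by (intro LL_add LL_diff LL_mult LL_const LL_nth LL_of_real LL_qf)

lemma LL_dB: "LL (\<lambda>p. dB p e) p"
  unfolding dB_def spr_def Complex_eq power2_eq_square
  by (intro LL_add LL_diff LL_mult LL_const LL_nth LL_of_real LL_qf LL_minus)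

lemma LL_wv: "LL (\<lambda>p. wv p $ i) p"
proof -
  have "i = 1 \<or> i = 2 \<or> i = 3" by (rule exhaust_3)
  then show ?thesis
    by (elim disjE) (simp_all only: wv1 wv2 wv3, (intro LL_diff LL_mult LL_dA LL_dB)+)
qed

lemma LL_phi: "LL phi p"
  unfolding phi_def[abs_def] alpha0_eq beta0_eq Complex_eq
  by (intro LL_Pair LL_add LL_diff LL_mult LL_const LL_nth LL_of_real LL_qf)

definition Vf :: "(complex \<Rightarrow> real) \<Rightarrow> (complex \<times> complex \<Rightarrow> complex) \<Rightarrow> real^3 \<Rightarrow> real^3" where
  "Vf f h p = (\<chi> i. f (h (phi p) * wv p $ i))"

lemma Bfield_Vf: "Bfield h 0 = Vf Im h"
  unfolding Bfield_def Vf_def by (simp add: Ffield0 fun_eq_iff)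
lemma Efield_Vf: "Efield h 0 = Vf Re h"
  unfolding Efield_def Vf_def by (simp add: Ffield0 fun_eq_iff)

lemma LL_Vf:
  assumes U: "open U" "S3 \<subseteq> U" "holomorphic2_on h U" and f: "f = Re \<or> f = Im"
  shows "LL (Vf f h) p"
proof -
  have hp: "LL (\<lambda>q. h (phi q)) p"
    by (rule LL_compose[OF LL_phi LL_holo[OF U(1) U(3)]]) (use phi_S3 U(2) in blast)
  show ?thesis unfolding Vf_def
    apply (rule LL_vec)
    using f by (auto intro!: LL_Re LL_Im LL_mult hp LL_wv)
qed

lemma LL_W:
  assumes "LL V p" "V p $ j \<noteq> 0"
  shows "LL (\<lambda>q. (\<chi> i. V q $ i / V q $ j) :: real^3) p"
proof -
  have c: "LL (\<lambda>q. V q $ i) p" for i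
    using LL_compose[OF assms(1) LL_nth] by blast
  show ?thesis by (rule LL_vec) (simp, intro LL_divide c assms(2))
qed

lemma inv_pos:
  fixes f f' :: "real \<Rightarrow> real"
  assumes der: "\<And>s. (f has_real_derivative f' s) (at s)"
    and ce: "c < s0" "s0 < e" and pos: "\<And>s. s \<in> {c..e} \<Longrightarrow> f' s > 0"
  shows "\<exists>A B \<sigma>. A < f s0 \<and> f s0 < B \<and>
     (\<forall>u\<in>{A<..<B}. (\<sigma> has_real_derivative inverse (f' (\<sigma> u))) (at u) \<and> f (\<sigma> u) = u \<and> \<sigma> u \<in> {c<..<e}) \<and>
     (\<forall>s\<in>{c<..<e}. f s \<in> {A<..<B} \<and> \<sigma> (f s) = s)"
proof -
  have mono: "f x < f y" if "c \<le> x" "x < y" "y \<le> e" for x y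
    by (rule DERIV_pos_imp_increasing[OF that(2)]) (use der pos that in force)
  have cont: "isCont f x" for x using der DERIV_isCont by blast
  define \<sigma> where "\<sigma> = inv_into {c..e} f"
  have inj: "inj_on f {c..e}"
  proof (rule inj_onI)
    fix x y assume "x \<in> {c..e}" "y \<in> {c..e}" "f x = f y"
    then show "x = y" using mono[of x y] mono[of y x] by (cases x y rule: linorder_cases) auto
  qed
  have sf: "\<sigma> (f z) = z" if "z \<in> {c..e}" for z unfolding \<sigma>_def using inv_into_f_f[OF inj that] .
  have surj: "\<exists>s\<in>{c<..<e}. f s = u" if u: "u \<in> {f c<..<f e}" for u
  proof -
    obtain s where s: "c \<le> s" "s \<le> e" "f s = u"
      using IVT[of f c u e] u ce cont by auto
    then have "s \<noteq> c" "s \<noteq> e" using u by auto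
    with s show ?thesis by auto
  qed
  show ?thesis
  proof (intro exI conjI ballI)
    show "f c < f s0" "f s0 < f e" using mono ce by auto
  next
    fix u assume u: "u \<in> {f c<..<f e}"
    obtain s where s: "s \<in> {c<..<e}" "f s = u" using surj[OF u] by blast
    have su: "\<sigma> u = s" using sf[of s] s by auto
    show "f (\<sigma> u) = u" "\<sigma> u \<in> {c<..<e}" using su s by auto
    have ic: "isCont \<sigma> (f s)"
      by (rule isCont_inverse_function2[of c s e]) (use s sf cont in auto)
    show "(\<sigma> has_real_derivative inverse (f' (\<sigma> u))) (at u)"
    proof (rule DERIV_inverse_function[of f])
      show "(f has_real_derivative f' (\<sigma> u)) (at (\<sigma> u))" by (rule der)
      show "f' (\<sigma> u) \<noteq> 0" using pos[of "\<sigma> u"] su s by auto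
      show "f c < u" "u < f e" using u by auto
      show "f (\<sigma> y) = y" if yy: "f c < y" "y < f e" for y
      proof -
        obtain t where "t \<in> {c<..<e}" "f t = y" using surj[of y] yy by auto
        then show ?thesis using sf[of t] by auto
      qed
      show "isCont \<sigma> u" using ic s by simp
    qed
  next
    fix s assume s: "s \<in> {c<..<e}"
    show "f s \<in> {f c<..<f e}" using mono[of c s] mono[of s e] s by auto
    show "\<sigma> (f s) = s" using sf s by auto
  qed
qed

lemma inv_nz:
  fixes f f' :: "real \<Rightarrow> real"
  assumes der: "\<And>s. (f has_real_derivative f' s) (at s)"
    and cont: "continuous_on UNIV f'" and nz: "f' s0 \<noteq> 0"
  shows "\<exists>A B \<sigma> d. A < f s0 \<and> f s0 < B \<and> d > 0 \<and>
     (\<forall>u\<in>{A<..<B}. (\<sigma> has_real_derivative inverse (f' (\<sigma> u))) (at u) \<and> f (\<sigma> u) = u) \<and>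
     (\<forall>s. \<bar>s - s0\<bar> < d \<longrightarrow> f s \<in> {A<..<B} \<and> \<sigma> (f s) = s)"
proof -
  have "isCont f' s0" using cont by (simp add: continuous_on_eq_continuous_at)
  then obtain \<delta> where \<delta>: "\<delta> > 0" "\<And>s. dist s s0 < \<delta> \<Longrightarrow> dist (f' s) (f' s0) < \<bar>f' s0\<bar>"
    using nz unfolding continuous_at_eps_delta by (meson zero_less_abs_iff)
  define c where "c = s0 - \<delta>/2"
  define e where "e = s0 + \<delta>/2"
  have ce: "c < s0" "s0 < e" using \<delta> unfolding c_def e_def by auto
  have near: "\<bar>f' s - f' s0\<bar> < \<bar>f' s0\<bar>" if "s \<in> {c..e}" for s
    using \<delta>(2)[of s] that \<delta>(1) unfolding c_def e_def dist_real_def by auto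
  show ?thesis
  proof (cases "f' s0 > 0")
    case True
    have "\<And>s. s \<in> {c..e} \<Longrightarrow> f' s > 0" using near True by fastforce
    from inv_pos[OF der ce this] obtain A B \<sigma> where H:
      "A < f s0" "f s0 < B"
      "\<forall>u\<in>{A<..<B}. (\<sigma> has_real_derivative inverse (f' (\<sigma> u))) (at u) \<and> f (\<sigma> u) = u \<and> \<sigma> u \<in> {c<..<e}"
      "\<forall>s\<in>{c<..<e}. f s \<in> {A<..<B} \<and> \<sigma> (f s) = s" by blast
    show ?thesis
    proof (rule exI[of _ A], rule exI[of _ B], rule exI[of _ \<sigma>], rule exI[of _ "\<delta>/2"], intro conjI allI impI)
      fix s assume "\<bar>s - s0\<bar> < \<delta>/2"
      then have "s0 - \<delta>/2 < s" "s < s0 + \<delta>/2" by arith+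
      then have "s \<in> {c<..<e}" unfolding c_def e_def by auto
      then show "f s \<in> {A<..<B}" "\<sigma> (f s) = s" using H(4) by auto
    qed (use H \<delta>(1) in auto)
  next
    case False
    then have neg: "f' s0 < 0" using nz by simp
    have der2: "((\<lambda>s. - f s) has_real_derivative - f' s) (at s)" for s
      using der by (auto intro!: derivative_eq_intros)
    have "\<And>s. s \<in> {c..e} \<Longrightarrow> - f' s > 0" using near neg by fastforce
    from inv_pos[OF der2 ce this] obtain A B \<sigma> where H:
      "A < - f s0" "- f s0 < B"
      "\<forall>u\<in>{A<..<B}. (\<sigma> has_real_derivative inverse (- f' (\<sigma> u))) (at u) \<and> - f (\<sigma> u) = u \<and> \<sigma> u \<in> {c<..<e}"
      "\<forall>s\<in>{c<..<e}. - f s \<in> {A<..<B} \<and> \<sigma> (- f s) = s" by blast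
    show ?thesis
    proof (rule exI[of _ "-B"], rule exI[of _ "-A"], rule exI[of _ "\<lambda>u. \<sigma> (- u)"], rule exI[of _ "\<delta>/2"], intro conjI ballI allI impI)
      show "- B < f s0" "f s0 < - A" "\<delta>/2 > 0" using H \<delta> by auto
    next
      fix u assume u: "u \<in> {-B<..<-A}"
      then have mu: "- u \<in> {A<..<B}" by auto
      have d: "(\<sigma> has_real_derivative inverse (- f' (\<sigma> (- u)))) (at (- u))" using H(3) mu by blast
      have dm: "((\<lambda>u::real. - u) has_real_derivative -1) (at u)" by (auto intro!: derivative_eq_intros)
      have "((\<lambda>u. \<sigma> (- u)) has_real_derivative (inverse (- f' (\<sigma> (- u)))) * (-1)) (at u)"
        by (rule DERIV_chain2[OF d dm])
      then show "((\<lambda>u. \<sigma> (- u)) has_real_derivative inverse (f' (\<sigma> (- u)))) (at u)"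
        by (simp add: inverse_minus_eq)
      show "f (\<sigma> (- u)) = u" using H(3) mu by force
    next
      fix s assume "\<bar>s - s0\<bar> < \<delta>/2"
      then have "s0 - \<delta>/2 < s" "s < s0 + \<delta>/2" by arith+
      then have "s \<in> {c<..<e}" unfolding c_def e_def by auto
      then have "A < - f s" "- f s < B" "\<sigma> (- f s) = s" using H(4) by auto
      then show "f s \<in> {-B<..<-A}" "\<sigma> (- f s) = s" by auto
    qed
  qed
qed

lemma comp_deriv:
  assumes "(\<gamma> has_vector_derivative v) F"
  shows "((\<lambda>s. \<gamma> s $ j) has_real_derivative v $ j) F"
proof -
  have "((\<lambda>s. \<gamma> s $ j) has_derivative (\<lambda>t. (t *\<^sub>R v) $ j)) F"
    using bounded_linear.has_derivative[OF bounded_linear_vec_nth assms[unfolded has_vector_derivative_def]] .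
  moreover have "(\<lambda>t. (t *\<^sub>R v) $ j) = (*) (v $ j)" by (auto simp: mult.commute)
  ultimately show ?thesis unfolding has_field_derivative_def by simp
qed

lemma field_line_facts:
  assumes "closed_field_line V \<gamma>"
  shows "\<And>s. (\<gamma> has_vector_derivative vector_derivative \<gamma> (at s)) (at s)"
    and "continuous_on UNIV (\<lambda>s. vector_derivative \<gamma> (at s))"
    and "\<And>s. \<exists>k. k \<noteq> 0 \<and> vector_derivative \<gamma> (at s) = k *\<^sub>R V (\<gamma> s)"
    and "\<And>s. V (\<gamma> s) \<noteq> 0"
    and "continuous_on UNIV \<gamma>"
proof -
  have d: "\<forall>s. \<gamma> differentiable (at s)" and nz: "\<forall>s. vector_derivative \<gamma> (at s) \<noteq> 0"
    and c: "continuous_on UNIV (\<lambda>s. vector_derivative \<gamma> (at s))"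
    and f: "\<forall>s. V (\<gamma> s) \<noteq> 0 \<and> (\<exists>k::real. vector_derivative \<gamma> (at s) = k *\<^sub>R V (\<gamma> s))"
    using assms unfolding closed_field_line_def closed_embedded_curve_def by blast+
  show "(\<gamma> has_vector_derivative vector_derivative \<gamma> (at s)) (at s)" for s
    using d vector_derivative_works by blast
  show "continuous_on UNIV (\<lambda>s. vector_derivative \<gamma> (at s))" by (rule c)
  show "\<exists>k. k \<noteq> 0 \<and> vector_derivative \<gamma> (at s) = k *\<^sub>R V (\<gamma> s)" for s
    using f nz by (metis scaleR_zero_left)
  show "V (\<gamma> s) \<noteq> 0" for s using f by blast
  show "continuous_on UNIV \<gamma>"
    using d by (simp add: continuous_at_imp_continuous_on differentiable_imp_continuous_within)
qed

lemma W_eq: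
  assumes "k \<noteq> 0"
  shows "inverse ((k *\<^sub>R X) $ j) *\<^sub>R (k *\<^sub>R X) = (\<chi> i. X $ i / X $ j :: real^'n)"
  using assms by (simp add: vec_eq_iff field_simps)

lemma local_same:
  assumes c1: "closed_field_line V \<gamma>1" and c2: "closed_field_line V \<gamma>2"
    and LLV: "\<And>p. LL V p" and eq: "\<gamma>1 s1 = \<gamma>2 s2"
  shows "\<exists>d>0. \<forall>s. \<bar>s - s1\<bar> < d \<longrightarrow> \<gamma>1 s \<in> range \<gamma>2"
proof -
  define p where "p = \<gamma>1 s1"
  have "V p \<noteq> 0" using field_line_facts(4)[OF c1] unfolding p_def by blast
  then obtain j where j: "V p $ j \<noteq> 0" by (auto simp: vec_eq_iff)
  define g1 where "g1 s = vector_derivative \<gamma>1 (at s)" for s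
  define g2 where "g2 s = vector_derivative \<gamma>2 (at s)" for s
  have vd1: "(\<gamma>1 has_vector_derivative g1 s) (at s)" for s unfolding g1_def by (rule field_line_facts(1)[OF c1])
  have vd2: "(\<gamma>2 has_vector_derivative g2 s) (at s)" for s unfolding g2_def by (rule field_line_facts(1)[OF c2])
  have k1: "\<exists>k. k \<noteq> 0 \<and> g1 s = k *\<^sub>R V (\<gamma>1 s)" for s unfolding g1_def by (rule field_line_facts(3)[OF c1])
  have k2: "\<exists>k. k \<noteq> 0 \<and> g2 s = k *\<^sub>R V (\<gamma>2 s)" for s unfolding g2_def by (rule field_line_facts(3)[OF c2])
  have cg1: "continuous_on UNIV (\<lambda>s. g1 s $ j)" unfolding g1_def
    by (intro continuous_on_component field_line_facts(2)[OF c1])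
  have cg2: "continuous_on UNIV (\<lambda>s. g2 s $ j)" unfolding g2_def
    by (intro continuous_on_component field_line_facts(2)[OF c2])
  have nz1: "g1 s1 $ j \<noteq> 0" using k1[of s1] j unfolding p_def by auto
  have nz2: "g2 s2 $ j \<noteq> 0" using k2[of s2] j eq unfolding p_def by auto
  obtain A1 B1 \<sigma>1 d1 where R1: "A1 < \<gamma>1 s1 $ j" "\<gamma>1 s1 $ j < B1" "d1 > 0"
     "\<forall>u\<in>{A1<..<B1}. (\<sigma>1 has_real_derivative inverse (g1 (\<sigma>1 u) $ j)) (at u) \<and> \<gamma>1 (\<sigma>1 u) $ j = u"
     "\<forall>s. \<bar>s - s1\<bar> < d1 \<longrightarrow> \<gamma>1 s $ j \<in> {A1<..<B1} \<and> \<sigma>1 (\<gamma>1 s $ j) = s"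
    using inv_nz[of "\<lambda>s. \<gamma>1 s $ j" "\<lambda>s. g1 s $ j", OF comp_deriv[OF vd1] cg1 nz1] by blast
  obtain A2 B2 \<sigma>2 d2 where R2: "A2 < \<gamma>2 s2 $ j" "\<gamma>2 s2 $ j < B2" "d2 > 0"
     "\<forall>u\<in>{A2<..<B2}. (\<sigma>2 has_real_derivative inverse (g2 (\<sigma>2 u) $ j)) (at u) \<and> \<gamma>2 (\<sigma>2 u) $ j = u"
     "\<forall>s. \<bar>s - s2\<bar> < d2 \<longrightarrow> \<gamma>2 s $ j \<in> {A2<..<B2} \<and> \<sigma>2 (\<gamma>2 s $ j) = s"
    using inv_nz[of "\<lambda>s. \<gamma>2 s $ j" "\<lambda>s. g2 s $ j", OF comp_deriv[OF vd2] cg2 nz2] by blast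
  define u0 where "u0 = p $ j"
  have u01: "\<gamma>1 s1 $ j = u0" and u02: "\<gamma>2 s2 $ j = u0" unfolding u0_def p_def using eq by auto
  have s01: "\<sigma>1 u0 = s1" using R1(5)[rule_format, of s1] R1(3) u01 by simp
  have s02: "\<sigma>2 u0 = s2" using R2(5)[rule_format, of s2] R2(3) u02 by simp
  define W where "W q = (\<chi> i. V q $ i / V q $ j :: real^_)" for q
  obtain e C where e: "e > 0" and lip: "C-lipschitz_on (ball p e) W"
    using LL_W[OF LLV j] unfolding LL_def W_def by blast
  define \<eta>1 where "\<eta>1 = \<gamma>1 \<circ> \<sigma>1"
  define \<eta>2 where "\<eta>2 = \<gamma>2 \<circ> \<sigma>2"
  have de1: "(\<eta>1 has_vector_derivative W (\<eta>1 u)) (at u)" if u: "u \<in> {A1<..<B1}" for u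
  proof -
    have "(\<sigma>1 has_vector_derivative inverse (g1 (\<sigma>1 u) $ j)) (at u)"
      using R1(4) u has_real_derivative_iff_has_vector_derivative by blast
    from vector_diff_chain_at[OF this vd1]
    have "(\<eta>1 has_vector_derivative inverse (g1 (\<sigma>1 u) $ j) *\<^sub>R g1 (\<sigma>1 u)) (at u)" unfolding \<eta>1_def .
    moreover obtain k where kk: "k \<noteq> 0" "g1 (\<sigma>1 u) = k *\<^sub>R V (\<gamma>1 (\<sigma>1 u))" using k1 by blast
    have "inverse (g1 (\<sigma>1 u) $ j) *\<^sub>R g1 (\<sigma>1 u) = W (\<eta>1 u)"
      unfolding kk(2) W_def \<eta>1_def o_def by (rule W_eq[OF kk(1)])
    ultimately show ?thesis by simp
  qed
  have de2: "(\<eta>2 has_vector_derivative W (\<eta>2 u)) (at u)" if u: "u \<in> {A2<..<B2}" for u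
  proof -
    have "(\<sigma>2 has_vector_derivative inverse (g2 (\<sigma>2 u) $ j)) (at u)"
      using R2(4) u has_real_derivative_iff_has_vector_derivative by blast
    from vector_diff_chain_at[OF this vd2]
    have "(\<eta>2 has_vector_derivative inverse (g2 (\<sigma>2 u) $ j) *\<^sub>R g2 (\<sigma>2 u)) (at u)" unfolding \<eta>2_def .
    moreover obtain k where kk: "k \<noteq> 0" "g2 (\<sigma>2 u) = k *\<^sub>R V (\<gamma>2 (\<sigma>2 u))" using k2 by blast
    have "inverse (g2 (\<sigma>2 u) $ j) *\<^sub>R g2 (\<sigma>2 u) = W (\<eta>2 u)"
      unfolding kk(2) W_def \<eta>2_def o_def by (rule W_eq[OF kk(1)])
    ultimately show ?thesis by simp
  qed
  have u0in1: "u0 \<in> {A1<..<B1}" using R1 u01 by auto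
  have u0in2: "u0 \<in> {A2<..<B2}" using R2 u02 by auto
  have e1p: "\<eta>1 u0 = p" unfolding \<eta>1_def p_def using s01 by simp
  have e2p: "\<eta>2 u0 = p" unfolding \<eta>2_def p_def using s02 eq by simp
  have "continuous (at u0) \<eta>1" using de1[OF u0in1] has_vector_derivative_continuous by blast
  then obtain r1 where r1: "r1 > 0" "\<And>u. dist u u0 < r1 \<Longrightarrow> dist (\<eta>1 u) (\<eta>1 u0) < e"
    unfolding continuous_at_eps_delta using e by blast
  have "continuous (at u0) \<eta>2" using de2[OF u0in2] has_vector_derivative_continuous by blast
  then obtain r2 where r2: "r2 > 0" "\<And>u. dist u u0 < r2 \<Longrightarrow> dist (\<eta>2 u) (\<eta>2 u0) < e"
    unfolding continuous_at_eps_delta using e by blast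
  define r where "r = Min {r1, r2, u0 - A1, B1 - u0, u0 - A2, B2 - u0}"
  have r: "r > 0" unfolding r_def using r1 r2 u0in1 u0in2 by simp
  have rle: "r \<le> r1" "r \<le> r2" "r \<le> u0 - A1" "r \<le> B1 - u0" "r \<le> u0 - A2" "r \<le> B2 - u0"
    unfolding r_def by auto
  have same: "\<eta>1 u = \<eta>2 u" if u: "u \<in> {u0 - r<..<u0 + r}" for u
  proof (rule ode_unique[OF lip _ _ _ _ _ u])
    show "(\<eta>1 has_vector_derivative W (\<eta>1 v)) (at v)" if "v \<in> {u0 - r<..<u0 + r}" for v
      using de1 that rle by auto
    show "(\<eta>2 has_vector_derivative W (\<eta>2 v)) (at v)" if "v \<in> {u0 - r<..<u0 + r}" for v
      using de2 that rle by auto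
    show "\<eta>1 v \<in> ball p e \<and> \<eta>2 v \<in> ball p e" if "v \<in> {u0 - r<..<u0 + r}" for v
    proof -
      have "dist v u0 < r" using that by (auto simp: dist_real_def abs_less_iff)
      then show ?thesis using r1(2)[of v] r2(2)[of v] rle e1p e2p by (auto simp: dist_commute)
    qed
    show "u0 \<in> {u0 - r<..<u0 + r}" using r by auto
    show "\<eta>1 u0 = \<eta>2 u0" using e1p e2p by simp
  qed
  have "isCont (\<lambda>s. \<gamma>1 s $ j) s1" using comp_deriv[OF vd1] DERIV_isCont by blast
  then obtain d3 where d3: "d3 > 0" "\<And>s. dist s s1 < d3 \<Longrightarrow> dist (\<gamma>1 s $ j) (\<gamma>1 s1 $ j) < r"
    unfolding continuous_at_eps_delta using r by blast
  show ?thesis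
  proof (intro exI[of _ "min d1 d3"] conjI allI impI)
    show "min d1 d3 > 0" using R1(3) d3(1) by simp
    fix s assume s: "\<bar>s - s1\<bar> < min d1 d3"
    define u where "u = \<gamma>1 s $ j"
    have su: "\<sigma>1 u = s" using R1(5) s unfolding u_def by auto
    have "dist u u0 < r" using d3(2)[of s] s u01 unfolding u_def by (auto simp: dist_real_def)
    then have uin: "u \<in> {u0 - r<..<u0 + r}" by (auto simp: dist_real_def abs_less_iff)
    have "\<gamma>1 s = \<eta>1 u" unfolding \<eta>1_def using su by simp
    also have "\<dots> = \<eta>2 u" by (rule same[OF uin])
    also have "\<dots> \<in> range \<gamma>2" unfolding \<eta>2_def by simp
    finally show "\<gamma>1 s \<in> range \<gamma>2" .
  qed
qed

lemma periodic_int: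
  fixes T s :: real
  assumes "\<forall>s. \<gamma> (s + T) = \<gamma> s"
  shows "\<gamma> (s + of_int n * T) = \<gamma> s"
proof -
  have nat: "\<gamma> (x + real m * T) = \<gamma> x" for m and x :: real
  proof (induction m)
    case 0
    show ?case by simp
  next
    case (Suc m)
    have "x + real (Suc m) * T = (x + real m * T) + T" by (simp add: algebra_simps)
    then have "\<gamma> (x + real (Suc m) * T) = \<gamma> (x + real m * T)" using assms by metis
    then show ?case using Suc.IH by (rule trans)
  qed
  show ?thesis
  proof (cases "n \<ge> 0")
    case True
    then have e: "of_int n = real (nat n)" by simp
    show ?thesis unfolding e by (rule nat)
  next
    case False
    then have e: "of_int n = - real (nat (-n))" by simp
    have "\<gamma> ((s + of_int n * T) + real (nat (-n)) * T) = \<gamma> (s + of_int n * T)" by (rule nat)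
    moreover have "(s + of_int n * T) + real (nat (-n)) * T = s" unfolding e by (simp add: algebra_simps)
    ultimately show ?thesis by simp
  qed
qed

lemma range_compact:
  assumes "closed_embedded_curve \<gamma>"
  shows "compact (range \<gamma>)"
proof -
  obtain T where T: "T > 0" "\<forall>s. \<gamma> (s + T) = \<gamma> s"
    using assms unfolding closed_embedded_curve_def by blast
  have cont: "continuous_on UNIV \<gamma>"
    using assms unfolding closed_embedded_curve_def
    by (simp add: continuous_at_imp_continuous_on differentiable_imp_continuous_within)
  have "range \<gamma> = \<gamma> ` {0..T}"
  proof
    show "range \<gamma> \<subseteq> \<gamma> ` {0..T}"
    proof
      fix y assume "y \<in> range \<gamma>"
      then obtain s where y: "y = \<gamma> s" by auto
      define n where "n = \<lfloor>s / T\<rfloor>"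
      define s' where "s' = s - of_int n * T"
      have "of_int n \<le> s / T" "s / T < of_int n + 1" unfolding n_def by linarith+
      then have "of_int n * T \<le> s" "s < (of_int n + 1) * T" using T(1) by (simp_all add: field_simps)
      then have s': "s' \<in> {0..T}" unfolding s'_def by (auto simp: algebra_simps)
      have "\<gamma> s' = \<gamma> (s' + of_int n * T)" using periodic_int[OF T(2), of s' n] by simp
      then have "\<gamma> s' = y" unfolding s'_def y by simp
      then show "y \<in> \<gamma> ` {0..T}" using s' by blast
    qed
  qed auto
  then show ?thesis
    by (simp add: compact_continuous_image continuous_on_subset[OF cont])
qed

lemma same_range:
  assumes c1: "closed_field_line V \<gamma>1" and c2: "closed_field_line V \<gamma>2"
    and LLV: "\<And>p. LL V p" and eq: "\<gamma>1 s1 = \<gamma>2 s2"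
  shows "range \<gamma>1 \<subseteq> range \<gamma>2"
proof -
  define S where "S = \<gamma>1 -` range \<gamma>2"
  have cl: "closed S" unfolding S_def
  proof (rule continuous_closed_vimage)
    show "closed (range \<gamma>2)"
      using range_compact c2 compact_imp_closed unfolding closed_field_line_def by blast
    show "continuous (at x) \<gamma>1" for x
      using field_line_facts(5)[OF c1] by (simp add: continuous_on_eq_continuous_at)
  qed
  have op: "open S" unfolding open_dist
  proof
    fix s assume "s \<in> S"
    then obtain s' where "\<gamma>1 s = \<gamma>2 s'" unfolding S_def by auto
    from local_same[OF c1 c2 LLV this] obtain d where "d > 0" "\<forall>t. \<bar>t - s\<bar> < d \<longrightarrow> \<gamma>1 t \<in> range \<gamma>2"
      by blast
    then show "\<exists>e>0. \<forall>y. dist y s < e \<longrightarrow> y \<in> S" unfolding S_def by (auto simp: dist_real_def)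
  qed
  have ne: "s1 \<in> S" unfolding S_def using eq by auto
  have "S = UNIV"
  proof -
    have "S = {} \<or> S = UNIV"
      using clopen[of S] cl op by blast
    then show ?thesis using ne by auto
  qed
  then show ?thesis unfolding S_def by auto
qed

theorem lemma1:
  fixes h :: "complex \<times> complex \<Rightarrow> complex"
    and U :: "(complex \<times> complex) set"
    and \<Gamma> :: "(real \<Rightarrow> real^3) set"
    and L :: "(real^3) set"
  assumes "open U" and "S3 \<subseteq> U" and "holomorphic2_on h U"
    and "finite \<Gamma>"
    and "L = (\<Union>\<gamma>\<in>\<Gamma>. range \<gamma>)"
    and "(\<forall>\<gamma>\<in>\<Gamma>. closed_field_line (Bfield h 0) \<gamma>) \<or> (\<forall>\<gamma>\<in>\<Gamma>. closed_field_line (Efield h 0) \<gamma>)"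
  shows "legendrian_link (phi ` L)"
proof -
  obtain f where f: "f = Re \<or> f = Im" and cfl: "\<forall>\<gamma>\<in>\<Gamma>. closed_field_line (Vf f h) \<gamma>"
    using assms(6) unfolding Bfield_Vf Efield_Vf by blast
  have LLV: "\<And>p. LL (Vf f h) p" by (rule LL_Vf[OF assms(1-3) f])
  define C where "C = (\<lambda>\<gamma>. phi \<circ> \<gamma>) ` \<Gamma>"
  show ?thesis unfolding legendrian_link_def
  proof (rule exI[of _ C], intro conjI)
    show "finite C" unfolding C_def using assms(4) by simp
    show "phi ` L = (\<Union>c\<in>C. range c)" unfolding C_def assms(5) by (auto simp: image_comp)
  next
    show "\<forall>c\<in>C. closed_embedded_curve c \<and> range c \<subseteq> S3 \<and> (\<forall>s. in_xi0 (c s) (vector_derivative c (at s)))"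
    proof
    fix c assume "c \<in> C"
    then obtain \<gamma> where g: "\<gamma> \<in> \<Gamma>" and c: "c = phi \<circ> \<gamma>" unfolding C_def by blast
    have cg: "closed_field_line (Vf f h) \<gamma>" using cfl g by blast
    have ce: "closed_embedded_curve \<gamma>" using cg unfolding closed_field_line_def by blast
    show "closed_embedded_curve c \<and> range c \<subseteq> S3 \<and> (\<forall>s. in_xi0 (c s) (vector_derivative c (at s)))"
    proof (intro conjI allI)
      show "closed_embedded_curve c" unfolding c by (rule curve_phi(1)[OF ce])
      show "range c \<subseteq> S3" unfolding c using phi_S3 by auto
      fix s
      obtain k where k: "vector_derivative \<gamma> (at s) = k *\<^sub>R Vf f h (\<gamma> s)"
        using field_line_facts(3)[OF cg] by blast
      show "in_xi0 (c s) (vector_derivative c (at s))"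
        unfolding c curve_phi(2)[OF ce] k Vf_def
        using legendrian_point[OF f, of "\<gamma> s" k "h (phi (\<gamma> s))"] by simp
    qed
    qed
  next
    show "\<forall>c1\<in>C. \<forall>c2\<in>C. range c1 = range c2 \<or> range c1 \<inter> range c2 = {}"
    proof (intro ballI)
    fix c1 c2 assume "c1 \<in> C" "c2 \<in> C"
    then obtain \<gamma>1 \<gamma>2 where g: "\<gamma>1 \<in> \<Gamma>" "\<gamma>2 \<in> \<Gamma>" and c: "c1 = phi \<circ> \<gamma>1" "c2 = phi \<circ> \<gamma>2"
      unfolding C_def by blast
    have cg: "closed_field_line (Vf f h) \<gamma>1" "closed_field_line (Vf f h) \<gamma>2" using cfl g by blast+
    show "range c1 = range c2 \<or> range c1 \<inter> range c2 = {}"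
    proof (cases "range c1 \<inter> range c2 = {}")
      case False
      then obtain y where "y \<in> range c1" "y \<in> range c2" by blast
      then obtain s1 s2 where "y = c1 s1" "y = c2 s2" by blast
      then have "phi (\<gamma>1 s1) = phi (\<gamma>2 s2)" unfolding c by simp
      then have e: "\<gamma>1 s1 = \<gamma>2 s2" using phi_inj by (simp add: inj_eq)
      have "range \<gamma>1 \<subseteq> range \<gamma>2" by (rule same_range[OF cg LLV e])
      moreover have "range \<gamma>2 \<subseteq> range \<gamma>1" by (rule same_range[OF cg(2) cg(1) LLV e[symmetric]])
      ultimately have "range \<gamma>1 = range \<gamma>2" by blast
      then have "phi ` range \<gamma>1 = phi ` range \<gamma>2" by simp
      then have "range c1 = range c2" unfolding c by (simp only: image_comp)
      then show ?thesis by blast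
    qed blast
    qed
  qed
qed

end
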